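(* In the $\mathbf N$-agent system described in the context, let $\{\boldsymbol\mu_t^{\mathbf N},\boldsymbol\nu_t^{\mathbf N}\}_{t\ge0}$ be the empirical joint state and action distributions induced by a policy $\boldsymbol\pi=\{\boldsymbol\pi_t\}_{t\ge0}$. Then for every $t\ge0$, $$\mathbb E\Big|\frac1{N_{\mathrm{pop}}}\sum_{k\in[K]}\sum_{j=1}^{N_k}r_k(x_{j,k}^t,u_{j,k}^t,\boldsymbol\mu_t^{\mathbf N},\boldsymbol\nu_t^{\mathbf N})-\sum_{k\in[K]}r_k^{\mathrm{MF}}(\boldsymbol\mu_t^{\mathbf N},\boldsymbol\pi_t)\Big|\le C_R\sqrt{|\mathcal U|}\frac1{N_{\mathrm{pop}}}\Big(\sum_{k\in[K]}\sqrt{N_k}\Big),$$ where $C_R=M_R+L_R$.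
   Context: Fix $K\ge1$, $N_1,\dots,N_K\ge1$, $[K]=\{1,\dots,K\}$, $N_{\mathrm{pop}}=\sum_kN_k$, finite sets $\mathcal X,\mathcal U$, $\mathcal P(A)$ the probability distributions on $A$, $|\cdot|_1$ the $L_1$ norm, constants $M_R,L_R,L_P>0$. Agent $j\in[N_k]$ of class $k$ has state $x_{j,k}^t$ and action $u_{j,k}^t$; $\boldsymbol\mu_t^{\mathbf N}(x,k)=\frac1{N_{\mathrm{pop}}}\sum_{j=1}^{N_k}\mathbf 1(x_{j,k}^t=x)$, $\boldsymbol\nu_t^{\mathbf N}(u,k)=\frac1{N_{\mathrm{pop}}}\sum_{j=1}^{N_k}\mathbf 1(u_{j,k}^t=u)$. For each $k$, $r_k:\mathcal X\times\mathcal U\times\mathcal P(\mathcal X\times[K])\times\mathcal P(\mathcal U\times[K])\to\mathbb R$ and $P_k:\mathcal X\times\mathcal U\times\mathcal P(\mathcal X\times[K])\times\mathcal P(\mathcal U\times[K])\to\mathcal P(\mathcal X)$ satisfy $|r_k|\le M_R$, $|r_k(x,u,\boldsymbol\mu_1,\boldsymbol\nu_1)-r_k(x,u,\boldsymbol\mu_2,\boldsymbol\nu_2)|\le L_R(|\boldsymbol\mu_1-\boldsymbol\mu_2|_1+|\boldsymbol\nu_1-\boldsymbol\nu_2|_1)$, $|P_k(x,u,\boldsymbol\mu_1,\boldsymbol\nu_1)-P_k(x,u,\boldsymbol\mu_2,\boldsymbol\nu_2)|_1\le L_P(|\boldsymbol\mu_1-\boldsymbol\mu_2|_1+|\boldsymbol\nu_1-\boldsymbol\nu_2|_1)$.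 A policy is $\boldsymbol\pi=\{\boldsymbol\pi_t\}_{t\ge0}$, $\boldsymbol\pi_t=(\pi_k^t)_k$, $\pi_k^t:\mathcal X\times\mathcal P(\mathcal X\times[K])\to\mathcal P(\mathcal U)$. Dynamics: conditioned on all states at time $t$, actions are independent across agents with $u_{j,k}^t\sim\pi_k^t(x_{j,k}^t,\boldsymbol\mu_t^{\mathbf N})$; conditioned on states and actions, next states are independent with $x_{j,k}^{t+1}\sim P_k(x_{j,k}^t,u_{j,k}^t,\boldsymbol\mu_t^{\mathbf N},\boldsymbol\nu_t^{\mathbf N})$. Mean-field: $\nu^{\mathrm{MF}}(\boldsymbol\mu,\boldsymbol\pi)(u,k)=\sum_x\pi_k(x,\boldsymbol\mu)(u)\boldsymbol\mu(x,k)$, $r_k^{\mathrm{MF}}(\boldsymbol\mu,\boldsymbol\pi)=\sum_{x,u}\boldsymbol\mu(x,k)\pi_k(x,\boldsymbol\mu)(u)r_k(x,u,\boldsymbol\mu,\nu^{\mathrm{MF}}(\boldsymbol\mu,\boldsymbol\pi))$. *)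

theory Defs
  imports "HOL-Probability.Probability"
begin

text \<open>Classes are 1..K; agent (j,k) with k in 1..K and j in 1..N k.
  A distribution on X x [K] is a function mu :: 'x => nat => real (mu x k).\<close>

definition agents :: "nat \<Rightarrow> (nat \<Rightarrow> nat) \<Rightarrow> (nat \<times> nat) set" where
  "agents K N = {(j, k). k \<in> {1..K} \<and> j \<in> {1..N k}}"

definition Npop :: "nat \<Rightarrow> (nat \<Rightarrow> nat) \<Rightarrow> nat" where
  "Npop K N = (\<Sum>k=1..K. N k)"

definition is_dist :: "nat \<Rightarrow> ('a::finite \<Rightarrow> nat \<Rightarrow> real) \<Rightarrow> bool" where
  "is_dist K m \<longleftrightarrow> (\<forall>a k. 0 \<le> m a k) \<and> (\<forall>a k. k \<notin> {1..K} \<longrightarrow> m a k = 0)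
     \<and> (\<Sum>a\<in>UNIV. \<Sum>k=1..K. m a k) = 1"

definition dist1 :: "nat \<Rightarrow> ('a::finite \<Rightarrow> nat \<Rightarrow> real) \<Rightarrow> ('a \<Rightarrow> nat \<Rightarrow> real) \<Rightarrow> real" where
  "dist1 K m1 m2 = (\<Sum>a\<in>UNIV. \<Sum>k=1..K. \<bar>m1 a k - m2 a k\<bar>)"

definition pmf_dist1 :: "'a::finite pmf \<Rightarrow> 'a pmf \<Rightarrow> real" where
  "pmf_dist1 p q = (\<Sum>a\<in>UNIV. \<bar>pmf p a - pmf q a\<bar>)"

definition emp :: "nat \<Rightarrow> (nat \<Rightarrow> nat) \<Rightarrow> (nat \<times> nat \<Rightarrow> 'a) \<Rightarrow> 'a \<Rightarrow> nat \<Rightarrow> real" where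
  "emp K N s a k = (if k \<in> {1..K}
      then real (card {j \<in> {1..N k}. s (j, k) = a}) / real (Npop K N) else 0)"

definition action_law ::
  "nat \<Rightarrow> (nat \<Rightarrow> nat) \<Rightarrow> (nat \<Rightarrow> nat \<Rightarrow> 'x \<Rightarrow> ('x \<Rightarrow> nat \<Rightarrow> real) \<Rightarrow> 'u pmf)
   \<Rightarrow> nat \<Rightarrow> (nat \<times> nat \<Rightarrow> 'x) \<Rightarrow> (nat \<times> nat \<Rightarrow> 'u) pmf" where
  "action_law K N pol t s =
     Pi_pmf (agents K N) undefined (\<lambda>(j, k). pol t k (s (j, k)) (emp K N s))"

definition next_law ::
  "nat \<Rightarrow> (nat \<Rightarrow> nat) \<Rightarrow> (nat \<Rightarrow> 'x \<Rightarrow> 'u \<Rightarrow> ('x \<Rightarrow> nat \<Rightarrow> real) \<Rightarrow> ('u \<Rightarrow> nat \<Rightarrow> real) \<Rightarrow> 'x pmf)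
   \<Rightarrow> (nat \<times> nat \<Rightarrow> 'x) \<Rightarrow> (nat \<times> nat \<Rightarrow> 'u) \<Rightarrow> (nat \<times> nat \<Rightarrow> 'x) pmf" where
  "next_law K N P s a =
     Pi_pmf (agents K N) undefined (\<lambda>(j, k). P k (s (j, k)) (a (j, k)) (emp K N s) (emp K N a))"

primrec state_law ::
  "nat \<Rightarrow> (nat \<Rightarrow> nat) \<Rightarrow> (nat \<Rightarrow> nat \<Rightarrow> 'x \<Rightarrow> ('x \<Rightarrow> nat \<Rightarrow> real) \<Rightarrow> 'u pmf)
   \<Rightarrow> (nat \<Rightarrow> 'x \<Rightarrow> 'u \<Rightarrow> ('x \<Rightarrow> nat \<Rightarrow> real) \<Rightarrow> ('u \<Rightarrow> nat \<Rightarrow> real) \<Rightarrow> 'x pmf)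
   \<Rightarrow> (nat \<times> nat \<Rightarrow> 'x) pmf \<Rightarrow> nat \<Rightarrow> (nat \<times> nat \<Rightarrow> 'x) pmf" where
  "state_law K N pol P init 0 = init"
| "state_law K N pol P init (Suc t) =
     bind_pmf (state_law K N pol P init t)
       (\<lambda>s. bind_pmf (action_law K N pol t s) (\<lambda>a. next_law K N P s a))"

definition sa_law ::
  "nat \<Rightarrow> (nat \<Rightarrow> nat) \<Rightarrow> (nat \<Rightarrow> nat \<Rightarrow> 'x \<Rightarrow> ('x \<Rightarrow> nat \<Rightarrow> real) \<Rightarrow> 'u pmf)
   \<Rightarrow> (nat \<Rightarrow> 'x \<Rightarrow> 'u \<Rightarrow> ('x \<Rightarrow> nat \<Rightarrow> real) \<Rightarrow> ('u \<Rightarrow> nat \<Rightarrow> real) \<Rightarrow> 'x pmf)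
   \<Rightarrow> (nat \<times> nat \<Rightarrow> 'x) pmf \<Rightarrow> nat \<Rightarrow> ((nat \<times> nat \<Rightarrow> 'x) \<times> (nat \<times> nat \<Rightarrow> 'u)) pmf" where
  "sa_law K N pol P init t =
     bind_pmf (state_law K N pol P init t)
       (\<lambda>s. map_pmf (\<lambda>a. (s, a)) (action_law K N pol t s))"

definition nu_MF :: "('x::finite \<Rightarrow> nat \<Rightarrow> real) \<Rightarrow> (nat \<Rightarrow> 'x \<Rightarrow> ('x \<Rightarrow> nat \<Rightarrow> real) \<Rightarrow> 'u pmf)
   \<Rightarrow> 'u \<Rightarrow> nat \<Rightarrow> real" where
  "nu_MF mu pit u k = (\<Sum>x\<in>UNIV. pmf (pit k x mu) u * mu x k)"

definition r_MF :: "(nat \<Rightarrow> 'x::finite \<Rightarrow> 'u::finite \<Rightarrow> ('x \<Rightarrow> nat \<Rightarrow> real) \<Rightarrow> ('u \<Rightarrow> nat \<Rightarrow> real) \<Rightarrow> real)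
   \<Rightarrow> nat \<Rightarrow> ('x \<Rightarrow> nat \<Rightarrow> real) \<Rightarrow> (nat \<Rightarrow> 'x \<Rightarrow> ('x \<Rightarrow> nat \<Rightarrow> real) \<Rightarrow> 'u pmf) \<Rightarrow> real" where
  "r_MF r k mu pit = (\<Sum>x\<in>UNIV. \<Sum>u\<in>UNIV.
      mu x k * pmf (pit k x mu) u * r k x u mu (nu_MF mu pit))"

end

theory Submission
  imports Defs
begin


lemma fin_Pi:
  fixes p :: "'i \<Rightarrow> 'u::finite pmf"
  assumes "finite A" shows "finite (set_pmf (Pi_pmf A d p))"
  using assms by (simp add: set_Pi_pmf finite_PiE_dflt)

lemma exp_pair_mult:
  fixes g :: "'a \<Rightarrow> real" and h :: "'b \<Rightarrow> real"
  assumes "finite (set_pmf p)" "finite (set_pmf q)"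
  shows "measure_pmf.expectation (pair_pmf p q) (\<lambda>x. g (fst x) * h (snd x))
     = measure_pmf.expectation p g * measure_pmf.expectation q h"
proof -
  have "measure_pmf.expectation (pair_pmf p q) (\<lambda>x. g (fst x) * h (snd x))
     = (\<Sum>x\<in>set_pmf p \<times> set_pmf q. g (fst x) * h (snd x) * pmf (pair_pmf p q) x)"
    using assms by (intro integral_measure_pmf_real) auto
  also have "\<dots> = (\<Sum>a\<in>set_pmf p. \<Sum>b\<in>set_pmf q. (g a * pmf p a) * (h b * pmf q b))"
  proof -
    have pp: "\<And>x. pmf (pair_pmf p q) x = pmf p (fst x) * pmf q (snd x)"
      by (metis pmf_pair prod.collapse)
    show ?thesis by (simp add: sum.cartesian_product case_prod_unfold pp mult_ac)
  qed
  also have "\<dots> = (\<Sum>a\<in>set_pmf p. g a * pmf p a) * (\<Sum>b\<in>set_pmf q. h b * pmf q b)"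
    by (simp add: sum_product)
  also have "\<dots> = measure_pmf.expectation p g * measure_pmf.expectation q h"
    using assms by (simp add: integral_measure_pmf_real[where A="set_pmf p"] integral_measure_pmf_real[where A="set_pmf q"])
  finally show ?thesis .
qed

lemma pi_sq:
  fixes p :: "'i \<Rightarrow> 'u::finite pmf" and g :: "'i \<Rightarrow> 'u \<Rightarrow> real"
  assumes "finite A" and "\<And>i. i \<in> A \<Longrightarrow> measure_pmf.expectation (p i) (g i) = 0"
  shows "measure_pmf.expectation (Pi_pmf A d p) (\<lambda>a. (\<Sum>i\<in>A. g i (a i))^2)
       = (\<Sum>i\<in>A. measure_pmf.expectation (p i) (\<lambda>v. (g i v)^2))"
  using assms
proof (induction A rule: finite_induct)
  case empty
  then show ?case by simp
next
  case (insert x A)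
  let ?Q = "pair_pmf (p x) (Pi_pmf A d p)"
  have finQ: "finite (set_pmf ?Q)" using insert.hyps by (simp add: fin_Pi)
  have S: "(\<Sum>i\<in>insert x A. g i ((f(x:=y)) i)) = g x y + (\<Sum>i\<in>A. g i (f i))" for f y
    using insert by (auto intro!: sum.cong)
  have "measure_pmf.expectation (Pi_pmf (insert x A) d p) (\<lambda>a. (\<Sum>i\<in>insert x A. g i (a i))^2)
     = measure_pmf.expectation ?Q (\<lambda>z. (g x (fst z))^2 + 2 * (g x (fst z) * (\<Sum>i\<in>A. g i (snd z i)))
          + (\<Sum>i\<in>A. g i (snd z i))^2)"
  proof -
    have "measure_pmf.expectation (Pi_pmf (insert x A) d p) (\<lambda>a. (\<Sum>i\<in>insert x A. g i (a i))^2)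
      = measure_pmf.expectation ?Q (\<lambda>z. (\<Sum>i\<in>insert x A. g i (((snd z)(x:=fst z)) i))^2)"
      using insert.hyps by (simp add: Pi_pmf_insert case_prod_unfold)
    also have "\<dots> = measure_pmf.expectation ?Q (\<lambda>z. (g x (fst z) + (\<Sum>i\<in>A. g i (snd z i)))^2)"
      by (simp only: S)
    finally show ?thesis by (simp add: power2_sum algebra_simps)
  qed
  also have "\<dots> = measure_pmf.expectation ?Q (\<lambda>z. (g x (fst z))^2)
     + 2 * measure_pmf.expectation ?Q (\<lambda>z. g x (fst z) * (\<Sum>i\<in>A. g i (snd z i)))
     + measure_pmf.expectation ?Q (\<lambda>z. (\<Sum>i\<in>A. g i (snd z i))^2)"
    using finQ by (simp add: integrable_measure_pmf_finite)
  also have "measure_pmf.expectation ?Q (\<lambda>z. g x (fst z) * (\<Sum>i\<in>A. g i (snd z i))) = 0"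
    using exp_pair_mult[of "p x" "Pi_pmf A d p" "g x" "\<lambda>f. \<Sum>i\<in>A. g i (f i)"] insert.prems insert.hyps fin_Pi[of A d p]
    by simp
  also have "measure_pmf.expectation ?Q (\<lambda>z. (\<Sum>i\<in>A. g i (snd z i))^2)
      = (\<Sum>i\<in>A. measure_pmf.expectation (p i) (\<lambda>v. (g i v)^2))"
    using insert expectation_pair_pmf_snd[of "p x" "Pi_pmf A d p" "\<lambda>a. (\<Sum>i\<in>A. g i (a i))^2"]
    by simp
  finally show ?case using insert
    by (simp add: expectation_pair_pmf_fst[of "p x" _ "\<lambda>v. (g x v)^2", simplified])
qed

lemma exp_abs_le_sqrt:
  fixes Z :: "'a \<Rightarrow> real"
  assumes "finite (set_pmf M)"
  shows "measure_pmf.expectation M (\<lambda>a. \<bar>Z a\<bar>) \<le> sqrt (measure_pmf.expectation M (\<lambda>a. (Z a)^2))"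
proof -
  have "0 \<le> measure_pmf.variance M (\<lambda>a. \<bar>Z a\<bar>)" by (rule measure_pmf.variance_positive)
  also have "\<dots> = measure_pmf.expectation M (\<lambda>a. (Z a)^2) - (measure_pmf.expectation M (\<lambda>a. \<bar>Z a\<bar>))^2"
    using assms by (subst measure_pmf.variance_eq) (auto simp: integrable_measure_pmf_finite)
  finally show ?thesis by (intro real_le_rsqrt) simp
qed

lemma pi_abs:
  fixes p :: "'i \<Rightarrow> 'u::finite pmf" and g :: "'i \<Rightarrow> 'u \<Rightarrow> real"
  assumes "finite A"
  shows "measure_pmf.expectation (Pi_pmf A d p)
      (\<lambda>a. \<bar>\<Sum>i\<in>A. (g i (a i) - measure_pmf.expectation (p i) (g i))\<bar>)
       \<le> sqrt (\<Sum>i\<in>A. measure_pmf.expectation (p i) (\<lambda>v. (g i v)^2))"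
proof -
  define h where "h i v = g i v - measure_pmf.expectation (p i) (g i)" for i v
  have h0: "measure_pmf.expectation (p i) (h i) = 0" for i
    unfolding h_def by (simp add: integrable_measure_pmf_finite prob_space.prob_space measure_pmf.prob_space)
  have hle: "measure_pmf.expectation (p i) (\<lambda>v. (h i v)^2) \<le> measure_pmf.expectation (p i) (\<lambda>v. (g i v)^2)" for i
  proof -
    have "measure_pmf.expectation (p i) (\<lambda>v. (h i v)^2) = measure_pmf.variance (p i) (g i)"
      by (simp add: h_def)
    also have "\<dots> = measure_pmf.expectation (p i) (\<lambda>v. (g i v)^2) - (measure_pmf.expectation (p i) (g i))^2"
      by (subst measure_pmf.variance_eq) (auto simp: integrable_measure_pmf_finite)
    finally show ?thesis by simp
  qed
  have "measure_pmf.expectation (Pi_pmf A d p) (\<lambda>a. \<bar>\<Sum>i\<in>A. h i (a i)\<bar>)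
      \<le> sqrt (measure_pmf.expectation (Pi_pmf A d p) (\<lambda>a. (\<Sum>i\<in>A. h i (a i))^2))"
    using assms by (intro exp_abs_le_sqrt fin_Pi)
  also have "\<dots> = sqrt (\<Sum>i\<in>A. measure_pmf.expectation (p i) (\<lambda>v. (h i v)^2))"
    using assms h0 by (subst pi_sq) auto
  also have "\<dots> \<le> sqrt (\<Sum>i\<in>A. measure_pmf.expectation (p i) (\<lambda>v. (g i v)^2))"
    by (intro real_sqrt_le_mono sum_mono hle)
  finally show ?thesis by (simp add: h_def)
qed



lemma agents_eq: "agents K N = (\<lambda>(k,j). (j,k)) ` (SIGMA k:{1..K}. {1..N k})"
  unfolding agents_def by (auto simp: image_iff)

lemma finite_agents: "finite (agents K N)"
  unfolding agents_eq by auto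

lemma sum_agents: "(\<Sum>q\<in>agents K N. f q) = (\<Sum>k=1..K. \<Sum>j=1..N k. f (j,k))"
proof -
  have "inj_on (\<lambda>(k,j). (j::nat,k::nat)) (SIGMA k:{1..K}. {1..N k})"
    by (auto simp: inj_on_def)
  then have "(\<Sum>q\<in>agents K N. f q) = (\<Sum>(k,j)\<in>(SIGMA k:{1..K}. {1..N k}). f (j,k))"
    unfolding agents_eq by (simp add: sum.reindex case_prod_unfold)
  also have "\<dots> = (\<Sum>k=1..K. \<Sum>j=1..N k. f (j,k))"
    by (rule sum.Sigma[symmetric]) auto
  finally show ?thesis .
qed

lemma card_agents: "card (agents K N) = Npop K N"
  using sum_agents[where K=K and N=N and f="\<lambda>_. (1::nat)"] by (simp add: Npop_def)

lemma sum_agents_class: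
  assumes "k \<in> {1..K}"
  shows "(\<Sum>q\<in>agents K N. if snd q = k then f q else 0) = (\<Sum>j=1..N k. f (j,k))"
proof -
  have "(\<Sum>q\<in>agents K N. if snd q = k then f q else 0)
      = (\<Sum>k'=1..K. if k' = k then (\<Sum>j=1..N k'. f (j,k')) else 0)"
    unfolding sum_agents by (intro sum.cong refl) auto
  also have "\<dots> = (\<Sum>j=1..N k. f (j,k))" using assms by (simp add: sum.delta)
  finally show ?thesis .
qed

lemma emp_sum:
  fixes s :: "nat \<times> nat \<Rightarrow> 'a::finite"
  assumes "k \<in> {1..K}"
  shows "(\<Sum>x\<in>UNIV. emp K N s x k * h x) = (\<Sum>j=1..N k. h (s (j,k))) / real (Npop K N)"
proof -
  have c: "real (card {j \<in> {1..N k}. s (j, k) = x}) = (\<Sum>j=1..N k. if s (j,k) = x then 1 else 0)" for x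
    using sum.inter_filter[of "{1..N k}" "\<lambda>_. (1::real)" "\<lambda>j. s (j,k) = x"] by simp
  have e: "emp K N s x k * h x = (\<Sum>j=1..N k. if s (j,k) = x then h x else 0) / real (Npop K N)" for x
    using assms unfolding emp_def c by (auto simp: sum_distrib_right intro!: sum.cong)
  have "(\<Sum>x\<in>UNIV. emp K N s x k * h x)
     = (\<Sum>x\<in>UNIV. (\<Sum>j=1..N k. if s (j,k) = x then h x else 0)) / real (Npop K N)"
    unfolding e by (simp add: sum_divide_distrib)
  also have "\<dots> = (\<Sum>j=1..N k. h (s (j,k))) / real (Npop K N)"
    by (subst sum.swap) (simp add: sum.delta')
  finally show ?thesis .
qed

lemma Npop_pos: assumes "K \<ge> 1" "\<And>k. k \<in> {1..K} \<Longrightarrow> N k \<ge> 1" shows "Npop K N > 0"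
proof -
  have "N 1 \<le> Npop K N" unfolding Npop_def using assms
    by (intro member_le_sum) auto
  moreover have "N 1 \<ge> 1" using assms by auto
  ultimately show ?thesis by simp
qed

lemma is_dist_emp:
  fixes s :: "nat \<times> nat \<Rightarrow> 'a::finite"
  assumes "Npop K N > 0"
  shows "is_dist K (emp K N s)"
proof -
  have "(\<Sum>a\<in>UNIV. \<Sum>k=1..K. emp K N s a k) = (\<Sum>k=1..K. \<Sum>a\<in>UNIV. emp K N s a k * 1)"
    by (subst sum.swap) simp
  also have "\<dots> = (\<Sum>k=1..K. real (N k) / real (Npop K N))"
    by (intro sum.cong refl) (subst emp_sum, auto)
  also have "\<dots> = 1"
  proof -
    have "(\<Sum>k=1..K. real (N k)) = real (Npop K N)" by (simp add: Npop_def)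
    then show ?thesis using assms by (simp add: sum_divide_distrib[symmetric])
  qed
  finally show ?thesis unfolding is_dist_def by (auto simp: emp_def)
qed

lemma is_dist_nu:
  fixes mu :: "'x::finite \<Rightarrow> nat \<Rightarrow> real" and pit :: "nat \<Rightarrow> 'x \<Rightarrow> ('x \<Rightarrow> nat \<Rightarrow> real) \<Rightarrow> 'u::finite pmf"
  assumes "is_dist K mu"
  shows "is_dist K (nu_MF mu pit)"
proof -
  have "(\<Sum>u\<in>UNIV. \<Sum>k=1..K. nu_MF mu pit u k)
      = (\<Sum>k=1..K. \<Sum>x\<in>UNIV. mu x k * (\<Sum>u\<in>UNIV. pmf (pit k x mu) u))"
    unfolding nu_MF_def
  proof -
    have "(\<Sum>u\<in>UNIV. \<Sum>k=1..K. \<Sum>x\<in>UNIV. pmf (pit k x mu) u * mu x k)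
       = (\<Sum>k=1..K. \<Sum>u\<in>UNIV. \<Sum>x\<in>UNIV. pmf (pit k x mu) u * mu x k)"
      by (rule sum.swap)
    also have "\<dots> = (\<Sum>k=1..K. \<Sum>x\<in>UNIV. \<Sum>u\<in>UNIV. pmf (pit k x mu) u * mu x k)"
      by (intro sum.cong refl, rule sum.swap)
    finally show "(\<Sum>u\<in>UNIV. \<Sum>k=1..K. \<Sum>x\<in>UNIV. pmf (pit k x mu) u * mu x k)
      = (\<Sum>k=1..K. \<Sum>x\<in>UNIV. mu x k * (\<Sum>u\<in>UNIV. pmf (pit k x mu) u))"
      by (simp add: sum_distrib_left mult.commute)
  qed
  also have "\<dots> = (\<Sum>k=1..K. \<Sum>x\<in>UNIV. mu x k)"
    by (simp add: sum_pmf_eq_1)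
  also have "\<dots> = 1" using assms unfolding is_dist_def by (subst sum.swap) simp
  finally show ?thesis using assms unfolding is_dist_def nu_MF_def
    by (auto intro!: sum_nonneg)
qed

lemma sqrt_sum_le: 
  assumes "finite S" "\<And>i. i \<in> S \<Longrightarrow> (0::real) \<le> f i"
  shows "sqrt (\<Sum>i\<in>S. f i) \<le> (\<Sum>i\<in>S. sqrt (f i))"
  using assms
proof (induction S rule: finite_induct)
  case (insert x F)
  have "sqrt (\<Sum>i\<in>insert x F. f i) = sqrt (f x + (\<Sum>i\<in>F. f i))" using insert by simp
  also have "\<dots> \<le> sqrt (f x) + sqrt (\<Sum>i\<in>F. f i)"
    using insert by (intro sqrt_add_le_add_sqrt) (auto intro!: sum_nonneg)
  also have "\<dots> \<le> sqrt (f x) + (\<Sum>i\<in>F. sqrt (f i))" using insert by auto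
  finally show ?case using insert by simp
qed simp

lemma sum_sqrt_le:
  fixes X :: "'u::finite \<Rightarrow> real"
  assumes "\<And>u. 0 \<le> X u"
  shows "(\<Sum>u\<in>UNIV. sqrt (X u)) \<le> sqrt (real CARD('u)) * sqrt (\<Sum>u\<in>UNIV. X u)"
proof -
  have "(\<Sum>u\<in>UNIV. 1 * sqrt (X u))^2 \<le> (\<Sum>u\<in>(UNIV::'u set). 1^2) * (\<Sum>u\<in>UNIV. (sqrt (X u))^2)"
    using Cauchy_Schwarz_ineq_sum[of "\<lambda>_. 1" "\<lambda>u. sqrt (X u)" UNIV] by simp
  also have "\<dots> = real CARD('u) * (\<Sum>u\<in>UNIV. X u)" using assms by simp
  finally have "(\<Sum>u\<in>UNIV. sqrt (X u)) \<le> sqrt (real CARD('u) * (\<Sum>u\<in>UNIV. X u))"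
    by (intro real_le_rsqrt) simp
  then show ?thesis by (simp add: real_sqrt_mult)
qed



lemma term_uk:
  fixes p :: "nat \<times> nat \<Rightarrow> 'u::finite pmf"
  assumes k: "k \<in> {1..K}" and Np: "Npop K N > 0"
  shows "measure_pmf.expectation (Pi_pmf (agents K N) d p)
     (\<lambda>a. \<bar>emp K N a u k - (\<Sum>j=1..N k. pmf (p (j,k)) u) / real (Npop K N)\<bar>)
   \<le> sqrt (\<Sum>j=1..N k. pmf (p (j,k)) u) / real (Npop K N)"
proof -
  define h where "h (q::nat\<times>nat) (v::'u) = (if snd q = k \<and> v = u then 1 else (0::real))" for q v
  have dl: "(\<Sum>a\<in>UNIV. (if a = u then 1 else 0) * f a) = f u" for f :: "'u \<Rightarrow> real"
  proof -
    have "(\<Sum>a\<in>UNIV. (if a = u then 1 else 0) * f a) = (\<Sum>a\<in>UNIV. if a = u then f a else 0)"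
      by (intro sum.cong) auto
    then show ?thesis by simp
  qed
  have Eh: "measure_pmf.expectation (p q) (h q) = (if snd q = k then pmf (p q) u else 0)" for q
    by (subst integral_measure_pmf_real[where A=UNIV]) (auto simp: h_def dl)
  have hsq: "(h q v)^2 = h q v" for q v by (simp add: h_def)
  have Eh2: "measure_pmf.expectation (p q) (\<lambda>v. (h q v)^2) = (if snd q = k then pmf (p q) u else 0)" for q
    using Eh[of q] by (simp add: hsq)
  have e1: "emp K N a u k = (\<Sum>q\<in>agents K N. h q (a q)) / real (Npop K N)" for a :: "nat \<times> nat \<Rightarrow> 'u"
  proof -
    have "emp K N a u k = (\<Sum>x\<in>UNIV. emp K N a x k * (if x = u then 1 else 0))"
      using dl[of "\<lambda>x. emp K N a x k"] by (simp add: mult.commute)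
    also have "\<dots> = (\<Sum>j=1..N k. (if a (j,k) = u then 1 else 0)) / real (Npop K N)"
      using k by (rule emp_sum)
    also have "(\<Sum>j=1..N k. (if a (j,k) = u then 1 else 0)) = (\<Sum>q\<in>agents K N. h q (a q))"
      using sum_agents_class[OF k, where N=N and f="\<lambda>q. if a q = u then 1 else (0::real)"]
    proof -
      have "(\<Sum>q\<in>agents K N. h q (a q)) = (\<Sum>q\<in>agents K N. if snd q = k then (if a q = u then 1 else 0) else 0)"
        by (intro sum.cong refl) (auto simp: h_def)
      then show ?thesis using sum_agents_class[OF k, where N=N and f="\<lambda>q. if a q = u then 1 else (0::real)"]
        by simp
    qed
    finally show ?thesis .
  qed
  have e2: "(\<Sum>j=1..N k. pmf (p (j,k)) u) = (\<Sum>q\<in>agents K N. measure_pmf.expectation (p q) (h q))"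
    unfolding Eh using sum_agents_class[OF k, where N=N and f="\<lambda>q. pmf (p q) u"] by simp
  have e3: "(\<Sum>j=1..N k. pmf (p (j,k)) u) = (\<Sum>q\<in>agents K N. measure_pmf.expectation (p q) (\<lambda>v. (h q v)^2))"
    unfolding Eh2 using sum_agents_class[OF k, where N=N and f="\<lambda>q. pmf (p q) u"] by simp
  have "measure_pmf.expectation (Pi_pmf (agents K N) d p)
     (\<lambda>a. \<bar>emp K N a u k - (\<Sum>j=1..N k. pmf (p (j,k)) u) / real (Npop K N)\<bar>)
    = measure_pmf.expectation (Pi_pmf (agents K N) d p)
     (\<lambda>a. \<bar>\<Sum>q\<in>agents K N. (h q (a q) - measure_pmf.expectation (p q) (h q))\<bar>) / real (Npop K N)"
    unfolding e1 e2 using Np by (simp add: sum_subtractf diff_divide_distrib[symmetric])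
  also have "\<dots> \<le> sqrt (\<Sum>q\<in>agents K N. measure_pmf.expectation (p q) (\<lambda>v. (h q v)^2)) / real (Npop K N)"
    using Np by (intro divide_right_mono pi_abs finite_agents) auto
  finally show ?thesis unfolding e3 .
qed

lemma per_s:
  fixes r :: "nat \<Rightarrow> 'x::finite \<Rightarrow> 'u::finite \<Rightarrow> ('x \<Rightarrow> nat \<Rightarrow> real) \<Rightarrow> ('u \<Rightarrow> nat \<Rightarrow> real) \<Rightarrow> real"
    and pol :: "nat \<Rightarrow> nat \<Rightarrow> 'x \<Rightarrow> ('x \<Rightarrow> nat \<Rightarrow> real) \<Rightarrow> 'u pmf"
    and s :: "nat \<times> nat \<Rightarrow> 'x"
  assumes K: "K \<ge> 1"
    and Npos: "\<And>k. k \<in> {1..K} \<Longrightarrow> N k \<ge> 1"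
    and MR: "M_R > 0" and LR: "L_R > 0"
    and r_bound: "\<And>k x u mu nu. k \<in> {1..K} \<Longrightarrow> is_dist K mu \<Longrightarrow> is_dist K nu \<Longrightarrow>
        \<bar>r k x u mu nu\<bar> \<le> M_R"
    and r_lip: "\<And>k x u mu1 nu1 mu2 nu2. k \<in> {1..K} \<Longrightarrow>
        is_dist K mu1 \<Longrightarrow> is_dist K nu1 \<Longrightarrow> is_dist K mu2 \<Longrightarrow> is_dist K nu2 \<Longrightarrow>
        \<bar>r k x u mu1 nu1 - r k x u mu2 nu2\<bar> \<le> L_R * (dist1 K mu1 mu2 + dist1 K nu1 nu2)"
  shows "measure_pmf.expectation (action_law K N pol t s)
           (\<lambda>a. \<bar>(1 / real (Npop K N)) * (\<Sum>k=1..K. \<Sum>j=1..N k.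
                r k (s (j, k)) (a (j, k)) (emp K N s) (emp K N a))
              - (\<Sum>k=1..K. r_MF r k (emp K N s) (pol t))\<bar>)
         \<le> (M_R + L_R) * sqrt (real CARD('u)) * (1 / real (Npop K N))
             * (\<Sum>k=1..K. sqrt (real (N k)))"
proof -
  define A where "A = agents K N"
  define Np where "Np = real (Npop K N)"
  define \<mu> where "\<mu> = emp K N s"
  define \<nu>0 where "\<nu>0 = nu_MF \<mu> (pol t)"
  define p where "p q = pol t (snd q) (s q) \<mu>" for q :: "nat \<times> nat"
  define g where "g q u = r (snd q) (s q) u \<mu> \<nu>0" for q :: "nat \<times> nat" and u
  have NpP: "Npop K N > 0" by (rule Npop_pos[OF K Npos])
  then have Np0: "Np > 0" by (simp add: Np_def)
  have law: "action_law K N pol t s = Pi_pmf A undefined p"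
    unfolding action_law_def A_def p_def \<mu>_def by (simp add: case_prod_unfold)
  have d\<mu>: "is_dist K \<mu>" unfolding \<mu>_def using NpP by (rule is_dist_emp)
  have d\<nu>: "is_dist K \<nu>0" unfolding \<nu>0_def by (rule is_dist_nu[OF d\<mu>])
  have demp: "is_dist K (emp K N a)" for a :: "nat \<times> nat \<Rightarrow> 'u" using NpP by (rule is_dist_emp)
  have finA: "finite A" unfolding A_def by (rule finite_agents)
  have cardA: "card A = Npop K N" unfolding A_def by (rule card_agents)
  have inA: "snd q \<in> {1..K}" if "q \<in> A" for q using that by (auto simp: A_def agents_def)
  have fin: "finite (set_pmf (Pi_pmf A undefined p))" using finA by (rule fin_Pi)
  have int: "integrable (measure_pmf (Pi_pmf A undefined p)) f" for f :: "_ \<Rightarrow> real"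
    using fin by (rule integrable_measure_pmf_finite)
  have Eg: "measure_pmf.expectation (p q) (g q) = (\<Sum>u\<in>UNIV. pmf (p q) u * g q u)" for q
    by (subst integral_measure_pmf_real[where A=UNIV]) (auto simp: mult.commute)
  have rMF: "(\<Sum>k=1..K. r_MF r k \<mu> (pol t)) = (\<Sum>q\<in>A. measure_pmf.expectation (p q) (g q)) / Np"
  proof -
    have "r_MF r k \<mu> (pol t) = (\<Sum>j=1..N k. \<Sum>u\<in>UNIV. pmf (pol t k (s (j,k)) \<mu>) u * r k (s (j,k)) u \<mu> \<nu>0) / Np"
      if k: "k \<in> {1..K}" for k
    proof -
      have "r_MF r k \<mu> (pol t) = (\<Sum>x\<in>UNIV. \<mu> x k * (\<Sum>u\<in>UNIV. pmf (pol t k x \<mu>) u * r k x u \<mu> \<nu>0))"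
        unfolding r_MF_def \<nu>0_def by (simp add: sum_distrib_left mult.assoc)
      also have "\<dots> = (\<Sum>j=1..N k. \<Sum>u\<in>UNIV. pmf (pol t k (s (j,k)) \<mu>) u * r k (s (j,k)) u \<mu> \<nu>0) / Np"
        unfolding Np_def \<mu>_def using k by (rule emp_sum)
      finally show ?thesis .
    qed
    then have "(\<Sum>k=1..K. r_MF r k \<mu> (pol t))
       = (\<Sum>k=1..K. (\<Sum>j=1..N k. \<Sum>u\<in>UNIV. pmf (pol t k (s (j,k)) \<mu>) u * r k (s (j,k)) u \<mu> \<nu>0) / Np)"
      by (intro sum.cong) auto
    also have "\<dots> = (\<Sum>k=1..K. \<Sum>j=1..N k. measure_pmf.expectation (p (j,k)) (g (j,k))) / Np"
    proof -
      have Eg': "measure_pmf.expectation (p (j,k)) (g (j,k)) = (\<Sum>u\<in>UNIV. pmf (pol t k (s (j,k)) \<mu>) u * r k (s (j,k)) u \<mu> \<nu>0)" for j k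
        using Eg[of "(j,k)"] by (simp add: p_def g_def)
      show ?thesis by (simp only: Eg' sum_divide_distrib)
    qed
    also have "\<dots> = (\<Sum>q\<in>A. measure_pmf.expectation (p q) (g q)) / Np"
      unfolding A_def sum_agents ..
    finally show ?thesis .
  qed
  define T where "T a = \<bar>\<Sum>q\<in>A. (g q (a q) - measure_pmf.expectation (p q) (g q))\<bar> / Np"
    for a :: "nat \<times> nat \<Rightarrow> 'u"
  define D where "D a = L_R * dist1 K (emp K N a) \<nu>0" for a :: "nat \<times> nat \<Rightarrow> 'u"
  have ptw: "\<bar>(1 / real (Npop K N)) * (\<Sum>k=1..K. \<Sum>j=1..N k.
                r k (s (j, k)) (a (j, k)) (emp K N s) (emp K N a))
              - (\<Sum>k=1..K. r_MF r k (emp K N s) (pol t))\<bar> \<le> D a + T a" for a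
  proof -
    define R where "R q = r (snd q) (s q) (a q) \<mu> (emp K N a)" for q
    have L: "(1 / real (Npop K N)) * (\<Sum>k=1..K. \<Sum>j=1..N k.
                r k (s (j, k)) (a (j, k)) (emp K N s) (emp K N a)) = (\<Sum>q\<in>A. R q) / Np"
      unfolding A_def sum_agents R_def \<mu>_def Np_def by simp
    have diffb: "\<bar>R q - g q (a q)\<bar> \<le> L_R * dist1 K (emp K N a) \<nu>0" if "q \<in> A" for q
      using r_lip[OF inA[OF that] d\<mu> demp d\<mu> d\<nu>, of "s q" "a q"]
      by (simp add: R_def g_def dist1_def)
    have "\<bar>(\<Sum>q\<in>A. R q) / Np - (\<Sum>q\<in>A. measure_pmf.expectation (p q) (g q)) / Np\<bar>
        = \<bar>(\<Sum>q\<in>A. (R q - g q (a q))) + (\<Sum>q\<in>A. (g q (a q) - measure_pmf.expectation (p q) (g q)))\<bar> / Np"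
      using Np0 by (simp add: sum_subtractf diff_divide_distrib[symmetric])
    also have "\<dots> \<le> ((\<Sum>q\<in>A. \<bar>R q - g q (a q)\<bar>) + \<bar>\<Sum>q\<in>A. (g q (a q) - measure_pmf.expectation (p q) (g q))\<bar>) / Np"
      using Np0 by (intro divide_right_mono order.trans[OF abs_triangle_ineq] add_right_mono sum_abs) auto
    also have "(\<Sum>q\<in>A. \<bar>R q - g q (a q)\<bar>) \<le> real (card A) * (L_R * dist1 K (emp K N a) \<nu>0)"
      by (rule sum_bounded_above) (rule diffb)
    finally have "\<bar>(\<Sum>q\<in>A. R q) / Np - (\<Sum>q\<in>A. measure_pmf.expectation (p q) (g q)) / Np\<bar>
       \<le> (Np * (L_R * dist1 K (emp K N a) \<nu>0) + \<bar>\<Sum>q\<in>A. (g q (a q) - measure_pmf.expectation (p q) (g q))\<bar>) / Np"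
      using Np0 by (simp add: cardA Np_def divide_right_mono)
    also have "\<dots> = D a + T a" using Np0 by (simp add: D_def T_def add_divide_distrib)
    finally show ?thesis using L rMF by (simp add: \<mu>_def)
  qed
  have ET: "measure_pmf.expectation (Pi_pmf A undefined p) T \<le> M_R * sqrt (real (Npop K N)) / Np"
  proof -
    have g2: "measure_pmf.expectation (p q) (\<lambda>v. (g q v)^2) \<le> M_R^2" if "q \<in> A" for q
    proof -
      have "(g q v)^2 \<le> M_R^2" for v
      proof -
        have "\<bar>g q v\<bar> \<le> M_R" unfolding g_def by (rule r_bound[OF inA[OF that] d\<mu> d\<nu>])
        then show ?thesis by (metis abs_ge_zero power2_abs power_mono)
      qed
      then have "measure_pmf.expectation (p q) (\<lambda>v. (g q v)^2) \<le> measure_pmf.expectation (p q) (\<lambda>v. M_R^2)"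
        by (intro integral_mono) (auto simp: integrable_measure_pmf_finite)
      then show ?thesis by simp
    qed
    have "measure_pmf.expectation (Pi_pmf A undefined p) T
        = measure_pmf.expectation (Pi_pmf A undefined p)
            (\<lambda>a. \<bar>\<Sum>q\<in>A. (g q (a q) - measure_pmf.expectation (p q) (g q))\<bar>) / Np"
      unfolding T_def by simp
    also have "\<dots> \<le> sqrt (\<Sum>q\<in>A. measure_pmf.expectation (p q) (\<lambda>v. (g q v)^2)) / Np"
      using Np0 by (intro divide_right_mono pi_abs finA) auto
    also have "\<dots> \<le> sqrt (real (card A) * M_R^2) / Np"
      using Np0 by (intro divide_right_mono real_sqrt_le_mono sum_bounded_above g2) auto
    also have "\<dots> = M_R * sqrt (real (Npop K N)) / Np"
      using MR by (simp add: cardA real_sqrt_mult)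
    finally show ?thesis .
  qed
  have ED: "measure_pmf.expectation (Pi_pmf A undefined p) D
      \<le> L_R * ((\<Sum>k=1..K. sqrt (real CARD('u)) * sqrt (real (N k))) / Np)"
  proof -
    have nu: "\<nu>0 u k = (\<Sum>j=1..N k. pmf (p (j,k)) u) / Np" if k: "k \<in> {1..K}" for u k
    proof -
      have "\<nu>0 u k = (\<Sum>x\<in>UNIV. \<mu> x k * pmf (pol t k x \<mu>) u)"
        unfolding \<nu>0_def nu_MF_def by (simp add: mult.commute)
      also have "\<dots> = (\<Sum>j=1..N k. pmf (pol t k (s (j,k)) \<mu>) u) / Np"
        unfolding Np_def \<mu>_def using k by (rule emp_sum)
      finally show ?thesis by (simp add: p_def)
    qed
    have tk: "measure_pmf.expectation (Pi_pmf A undefined p) (\<lambda>a. \<bar>emp K N a u k - \<nu>0 u k\<bar>)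
        \<le> sqrt (\<Sum>j=1..N k. pmf (p (j,k)) u) / Np" if k: "k \<in> {1..K}" for u k
      using term_uk[OF k NpP, where d=undefined and p=p and u=u] unfolding nu[OF k] A_def Np_def .
    have sN: "(\<Sum>u\<in>UNIV. \<Sum>j=1..N k. pmf (p (j,k)) u) = real (N k)" for k
      by (subst sum.swap) (simp add: sum_pmf_eq_1)
    have "measure_pmf.expectation (Pi_pmf A undefined p) D
        = L_R * (\<Sum>u\<in>UNIV. \<Sum>k=1..K. measure_pmf.expectation (Pi_pmf A undefined p) (\<lambda>a. \<bar>emp K N a u k - \<nu>0 u k\<bar>))"
      unfolding D_def dist1_def by (simp add: Bochner_Integration.integral_sum int)
    also have "\<dots> \<le> L_R * (\<Sum>u\<in>UNIV. \<Sum>k=1..K. sqrt (\<Sum>j=1..N k. pmf (p (j,k)) u) / Np)"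
      using LR by (intro mult_left_mono sum_mono tk) auto
    also have "(\<Sum>u\<in>UNIV. \<Sum>k=1..K. sqrt (\<Sum>j=1..N k. pmf (p (j,k)) u) / Np)
        = (\<Sum>k=1..K. (\<Sum>u\<in>UNIV. sqrt (\<Sum>j=1..N k. pmf (p (j,k)) u))) / Np"
      by (subst sum.swap) (simp add: sum_divide_distrib)
    also have "\<dots> \<le> (\<Sum>k=1..K. sqrt (real CARD('u)) * sqrt (real (N k))) / Np"
    proof (intro divide_right_mono sum_mono)
      fix k
      show "(\<Sum>u\<in>UNIV. sqrt (\<Sum>j=1..N k. pmf (p (j,k)) u)) \<le> sqrt (real CARD('u)) * sqrt (real (N k))"
        using sum_sqrt_le[of "\<lambda>u. \<Sum>j=1..N k. pmf (p (j,k)) u"] sN[of k] by (simp add: sum_nonneg)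
    qed (use Np0 in auto)
    finally show ?thesis using LR by simp
  qed
  define S where "S = (\<Sum>k=1..K. sqrt (real (N k)))"
  define c where "c = sqrt (real CARD('u))"
  have S0: "S \<ge> 0" unfolding S_def by (auto intro!: sum_nonneg)
  have c1: "1 \<le> c" unfolding c_def by simp
  have S1: "sqrt (real (Npop K N)) \<le> S"
  proof -
    have "real (Npop K N) = (\<Sum>k=1..K. real (N k))" by (simp add: Npop_def)
    then show ?thesis unfolding S_def by (simp add: sqrt_sum_le)
  qed
  have "1 * S \<le> c * S" by (rule mult_right_mono[OF c1 S0])
  with S1 have S2: "M_R * sqrt (real (Npop K N)) \<le> M_R * (c * S)"
    using MR by (intro mult_left_mono) auto
  have "measure_pmf.expectation (action_law K N pol t s)
           (\<lambda>a. \<bar>(1 / real (Npop K N)) * (\<Sum>k=1..K. \<Sum>j=1..N k.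
                r k (s (j, k)) (a (j, k)) (emp K N s) (emp K N a))
              - (\<Sum>k=1..K. r_MF r k (emp K N s) (pol t))\<bar>)
      \<le> measure_pmf.expectation (Pi_pmf A undefined p) (\<lambda>a. D a + T a)"
    unfolding law by (intro integral_mono int ptw)
  also have "\<dots> = measure_pmf.expectation (Pi_pmf A undefined p) D + measure_pmf.expectation (Pi_pmf A undefined p) T"
    by (simp add: int)
  also have "\<dots> \<le> L_R * ((c * S) / Np) + M_R * (c * S) / Np"
    using ED ET S2 Np0 divide_right_mono[OF S2, of Np]
    by (simp add: c_def S_def sum_distrib_left[symmetric])
  also have "\<dots> = (M_R + L_R) * c * (1 / real (Npop K N)) * S"
    by (simp add: Np_def add_divide_distrib[symmetric] algebra_simps)
  finally show ?thesis by (simp add: c_def S_def)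
qed

theorem lemma7:
  fixes K :: nat and N :: "nat \<Rightarrow> nat"
    and r :: "nat \<Rightarrow> 'x::finite \<Rightarrow> 'u::finite \<Rightarrow> ('x \<Rightarrow> nat \<Rightarrow> real) \<Rightarrow> ('u \<Rightarrow> nat \<Rightarrow> real) \<Rightarrow> real"
    and P :: "nat \<Rightarrow> 'x \<Rightarrow> 'u \<Rightarrow> ('x \<Rightarrow> nat \<Rightarrow> real) \<Rightarrow> ('u \<Rightarrow> nat \<Rightarrow> real) \<Rightarrow> 'x pmf"
    and pol :: "nat \<Rightarrow> nat \<Rightarrow> 'x \<Rightarrow> ('x \<Rightarrow> nat \<Rightarrow> real) \<Rightarrow> 'u pmf"
    and init :: "(nat \<times> nat \<Rightarrow> 'x) pmf"
    and M_R L_R L_P :: real and t :: nat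
  assumes K: "K \<ge> 1"
    and Npos: "\<And>k. k \<in> {1..K} \<Longrightarrow> N k \<ge> 1"
    and MR: "M_R > 0" and LR: "L_R > 0" and LP: "L_P > 0"
    and r_bound: "\<And>k x u mu nu. k \<in> {1..K} \<Longrightarrow> is_dist K mu \<Longrightarrow> is_dist K nu \<Longrightarrow>
        \<bar>r k x u mu nu\<bar> \<le> M_R"
    and r_lip: "\<And>k x u mu1 nu1 mu2 nu2. k \<in> {1..K} \<Longrightarrow>
        is_dist K mu1 \<Longrightarrow> is_dist K nu1 \<Longrightarrow> is_dist K mu2 \<Longrightarrow> is_dist K nu2 \<Longrightarrow>
        \<bar>r k x u mu1 nu1 - r k x u mu2 nu2\<bar> \<le> L_R * (dist1 K mu1 mu2 + dist1 K nu1 nu2)"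
    and P_lip: "\<And>k x u mu1 nu1 mu2 nu2. k \<in> {1..K} \<Longrightarrow>
        is_dist K mu1 \<Longrightarrow> is_dist K nu1 \<Longrightarrow> is_dist K mu2 \<Longrightarrow> is_dist K nu2 \<Longrightarrow>
        pmf_dist1 (P k x u mu1 nu1) (P k x u mu2 nu2) \<le> L_P * (dist1 K mu1 mu2 + dist1 K nu1 nu2)"
  shows "measure_pmf.expectation (sa_law K N pol P init t)
           (\<lambda>(s, a). \<bar>(1 / real (Npop K N)) * (\<Sum>k=1..K. \<Sum>j=1..N k.
                r k (s (j, k)) (a (j, k)) (emp K N s) (emp K N a))
              - (\<Sum>k=1..K. r_MF r k (emp K N s) (pol t))\<bar>)
         \<le> (M_R + L_R) * sqrt (real CARD('u)) * (1 / real (Npop K N))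
             * (\<Sum>k=1..K. sqrt (real (N k)))"
proof -
  define F where "F = (\<lambda>(s, a). \<bar>(1 / real (Npop K N)) * (\<Sum>k=1..K. \<Sum>j=1..N k.
                r k (s (j, k)) (a (j, k)) (emp K N s) (emp K N a))
              - (\<Sum>k=1..K. r_MF r k (emp K N s) (pol t))\<bar>)"
  define C where "C = (M_R + L_R) * sqrt (real CARD('u)) * (1 / real (Npop K N))
             * (\<Sum>k=1..K. sqrt (real (N k)))"
  have C0: "0 \<le> C" unfolding C_def using MR LR by (intro mult_nonneg_nonneg sum_nonneg) auto
  have per: "measure_pmf.expectation (action_law K N pol t s) (\<lambda>a. F (s, a)) \<le> C" for s
    unfolding F_def C_def using per_s[OF K Npos MR LR r_bound r_lip] by simp
  have F0: "0 \<le> F x" for x unfolding F_def by (simp add: case_prod_unfold)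
  have inner: "(\<integral>\<^sup>+a. ennreal (F (s, a)) \<partial>measure_pmf (action_law K N pol t s)) \<le> ennreal C" for s
  proof -
    have "finite (set_pmf (action_law K N pol t s))"
      unfolding action_law_def by (intro fin_Pi finite_agents)
    then have "(\<integral>\<^sup>+a. ennreal (F (s, a)) \<partial>measure_pmf (action_law K N pol t s))
        = ennreal (measure_pmf.expectation (action_law K N pol t s) (\<lambda>a. F (s, a)))"
      by (intro nn_integral_eq_integral integrable_measure_pmf_finite) (auto simp: F0)
    also have "\<dots> \<le> ennreal C" using per[of s] by (rule ennreal_leI)
    finally show ?thesis .
  qed
  have "measure_pmf.expectation (sa_law K N pol P init t) F
      = enn2real (\<integral>\<^sup>+x. ennreal (F x) \<partial>measure_pmf (sa_law K N pol P init t))"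
    by (rule integral_eq_nn_integral) (auto simp: F0)
  also have "\<dots> \<le> C"
  proof (rule enn2real_leI[OF C0])
    have "(\<integral>\<^sup>+x. ennreal (F x) \<partial>measure_pmf (sa_law K N pol P init t))
      = (\<integral>\<^sup>+s. (\<integral>\<^sup>+a. ennreal (F (s, a)) \<partial>measure_pmf (action_law K N pol t s))
           \<partial>measure_pmf (state_law K N pol P init t))"
      unfolding sa_law_def by simp
    also have "\<dots> \<le> (\<integral>\<^sup>+s. ennreal C \<partial>measure_pmf (state_law K N pol P init t))"
      by (intro nn_integral_mono inner)
    also have "\<dots> = ennreal C" by simp
    finally show "(\<integral>\<^sup>+x. ennreal (F x) \<partial>measure_pmf (sa_law K N pol P init t)) \<le> ennreal C" .
  qed
  finally show ?thesis unfolding F_def C_def .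
qed

end
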